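(* Let $G=(N,E)$ be a finite DAG with influential set $S^{inf.}(G)=\{s_1,\dots,s_m\}$. Then there is a directed path in $G$ passing through all agents of $S^{inf.}(G)$ in increasing order of their progeny, i.e. visiting $s_m,s_{m-1},\dots,s_1$ in this order. In particular, for all $1\le i<j\le m$, there is a directed path from $s_j$ to $s_i$, i.e. $s_j\in P_{s_i}$.
   Context: In a DAG $G=(N,E)$ with $N=\{1,\dots,n\}$, $P_i$ is the set of nodes having a directed path to $i$ (including $i$), and $p_i=|P_i|$. Write $p_i\succ p_j$ if $p_i>p_j$, or $p_i=p_j$ and $i<j$. Node $i$ is influential if, in the graph obtained from $G$ by deleting all out-edges of $i$, $p_i\succ p_j$ holds for all $j\ne i$ (progeny measured in that modified graph). The influential set $S^{inf.}(G)=\{s_1,\dots,s_m\}$ consists of all influential nodes, indexed so that $p_{s_1}\succ p_{s_2}\succ\cdots\succ p_{s_m}$, with progeny measured in $G$. *)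

theory Defs
  imports Main
begin

text \<open>A graph on nodes N = {1..n} is given by an edge relation E \<subseteq> N \<times> N;
  (a,b) \<in> E is the directed edge a \<rightarrow> b.  It is a DAG iff acyclic E.\<close>

definition progeny_set :: "(nat \<times> nat) set \<Rightarrow> nat \<Rightarrow> nat \<Rightarrow> nat set" where
  "progeny_set E n i = {j \<in> {1..n}. (j, i) \<in> E\<^sup>*}"

definition progeny :: "(nat \<times> nat) set \<Rightarrow> nat \<Rightarrow> nat \<Rightarrow> nat" where
  "progeny E n i = card (progeny_set E n i)"

definition prog_succ :: "(nat \<times> nat) set \<Rightarrow> nat \<Rightarrow> nat \<Rightarrow> nat \<Rightarrow> bool" where
  "prog_succ E n i j \<longleftrightarrow> progeny E n i > progeny E n j \<or>
     (progeny E n i = progeny E n j \<and> i < j)"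

definition delete_out_edges :: "(nat \<times> nat) set \<Rightarrow> nat \<Rightarrow> (nat \<times> nat) set" where
  "delete_out_edges E i = {(a, b) \<in> E. a \<noteq> i}"

definition influential :: "(nat \<times> nat) set \<Rightarrow> nat \<Rightarrow> nat \<Rightarrow> bool" where
  "influential E n i \<longleftrightarrow> i \<in> {1..n} \<and>
     (\<forall>j \<in> {1..n}. j \<noteq> i \<longrightarrow> prog_succ (delete_out_edges E i) n i j)"

definition is_dpath :: "(nat \<times> nat) set \<Rightarrow> nat list \<Rightarrow> bool" where
  "is_dpath E xs \<longleftrightarrow> distinct xs \<and> (\<forall>k. Suc k < length xs \<longrightarrow> (xs ! k, xs ! Suc k) \<in> E)"

end

theory Submission
  imports Defs "HOL-Library.Product_Lexorder"
begin

lemma succ_nth: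
  "successively P xs \<Longrightarrow> Suc k < length xs \<Longrightarrow> P (xs!k) (xs!Suc k)"
proof (induction xs arbitrary: k)
  case Nil then show ?case by simp
next
  case (Cons x xs)
  show ?case
  proof (cases k)
    case 0 then show ?thesis using Cons.prems
      by (cases xs) auto
  next
    case (Suc k') then show ?thesis using Cons
      by (cases xs) auto
  qed
qed

lemma succ_tl: "successively P xs \<Longrightarrow> successively P (tl xs)"
  by (cases xs) (auto simp: successively_Cons)

lemma succ_hd: "successively P xs \<Longrightarrow> tl xs \<noteq> [] \<Longrightarrow> P (hd xs) (hd (tl xs))"
  by (cases xs; cases "tl xs") auto

lemma succ_trancl:
  assumes "successively (\<lambda>x y. (x,y) \<in> E) xs" "i < j" "j < length xs"
  shows "(xs!i, xs!j) \<in> E\<^sup>+"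
  using assms(2,3)
proof (induction j)
  case 0 then show ?case by simp
next
  case (Suc j)
  have e: "(xs!j, xs!Suc j) \<in> E" using succ_nth[OF assms(1) Suc.prems(2)] by simp
  show ?case
  proof (cases "i = j")
    case True then show ?thesis using e by auto
  next
    case False
    then have "(xs!i, xs!j) \<in> E\<^sup>+" using Suc by auto
    then show ?thesis using e by (meson trancl.trancl_into_trancl)
  qed
qed

lemma walk_distinct:
  assumes "successively (\<lambda>x y. (x,y) \<in> E) xs" "acyclic E"
  shows "distinct xs"
proof -
  { fix i j assume ij: "i < j" "j < length xs" "xs!i = xs!j"
    then have "(xs!i, xs!i) \<in> E\<^sup>+" using succ_trancl[OF assms(1) ij(1,2)] by simp
    then have False using assms(2) unfolding acyclic_def by blast }
  then show ?thesis unfolding distinct_conv_nth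
    by (metis linorder_neqE_nat)
qed

lemma walk_of_rtrancl:
  assumes "(u,v) \<in> E\<^sup>*"
  shows "\<exists>ys. ys \<noteq> [] \<and> hd ys = u \<and> last ys = v \<and> successively (\<lambda>x y. (x,y) \<in> E) ys
           \<and> set ys \<subseteq> insert v (Domain E)"
  using assms
proof (induction rule: converse_rtrancl_induct)
  case base
  show ?case by (rule exI[of _ "[v]"]) auto
next
  case (step y z)
  then obtain ys where ys: "ys \<noteq> []" "hd ys = z" "last ys = v"
    "successively (\<lambda>x y. (x,y) \<in> E) ys" "set ys \<subseteq> insert v (Domain E)" by blast
  show ?case
    apply (rule exI[of _ "y # ys"])
    using ys step(1) by (auto simp: successively_Cons)
qed

lemma prog_keep_self:
  "progeny_set (delete_out_edges E b) n b = progeny_set E n b"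
proof -
  have sub: "delete_out_edges E b \<subseteq> E" unfolding delete_out_edges_def by auto
  have "(j,b) \<in> E\<^sup>* \<Longrightarrow> (j,b) \<in> (delete_out_edges E b)\<^sup>*" for j
  proof (induction rule: converse_rtrancl_induct)
    case base then show ?case by simp
  next
    case (step y z)
    show ?case
    proof (cases "y = b")
      case True then show ?thesis by simp
    next
      case False
      then have "(y,z) \<in> delete_out_edges E b" using step(1) unfolding delete_out_edges_def by auto
      then show ?thesis using step(3) by (meson converse_rtrancl_into_rtrancl)
    qed
  qed
  moreover have "(j,b) \<in> (delete_out_edges E b)\<^sup>* \<Longrightarrow> (j,b) \<in> E\<^sup>*" for j
    using rtrancl_mono[OF sub] by blast
  ultimately show ?thesis unfolding progeny_set_def by blast
qed

lemma prog_keep_other: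
  assumes "(b,a) \<notin> E\<^sup>*"
  shows "progeny_set (delete_out_edges E b) n a = progeny_set E n a"
proof -
  have sub: "delete_out_edges E b \<subseteq> E" unfolding delete_out_edges_def by auto
  have "(j,a) \<in> E\<^sup>* \<Longrightarrow> (j,a) \<in> (delete_out_edges E b)\<^sup>*" for j
  proof (induction rule: converse_rtrancl_induct)
    case base then show ?case by simp
  next
    case (step y z)
    have "y \<noteq> b" using step(1,2) assms by (meson converse_rtrancl_into_rtrancl)
    then have "(y,z) \<in> delete_out_edges E b" using step(1) unfolding delete_out_edges_def by auto
    then show ?case using step(3) by (meson converse_rtrancl_into_rtrancl)
  qed
  moreover have "(j,a) \<in> (delete_out_edges E b)\<^sup>* \<Longrightarrow> (j,a) \<in> E\<^sup>*" for j
    using rtrancl_mono[OF sub] by blast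
  ultimately show ?thesis unfolding progeny_set_def by blast
qed

lemma key_lemma:
  assumes "influential E n a" "influential E n b" "a \<noteq> b" "prog_succ E n a b"
  shows "b \<in> progeny_set E n a"
proof (rule ccontr)
  assume nb: "b \<notin> progeny_set E n a"
  have bn: "b \<in> {1..n}" using assms(2) unfolding influential_def by auto
  have an: "a \<in> {1..n}" using assms(1) unfolding influential_def by auto
  have "(b,a) \<notin> E\<^sup>*" using nb bn unfolding progeny_set_def by auto
  then have "progeny (delete_out_edges E b) n a = progeny E n a"
    using prog_keep_other unfolding progeny_def by metis
  moreover have "progeny (delete_out_edges E b) n b = progeny E n b"
    using prog_keep_self unfolding progeny_def by metis
  moreover have "prog_succ (delete_out_edges E b) n b a"
    using assms(2,3) an unfolding influential_def by auto
  ultimately have "prog_succ E n b a" unfolding prog_succ_def by simp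
  then show False using assms(4) unfolding prog_succ_def by auto
qed

definition key :: "(nat \<times> nat) set \<Rightarrow> nat \<Rightarrow> nat \<Rightarrow> nat \<times> nat" where
  "key E n s = (progeny E n s, n - s)"

lemma key_less:
  assumes "a \<in> {1..n}" "b \<in> {1..n}"
  shows "key E n b < key E n a \<longleftrightarrow> prog_succ E n a b"
  using assms unfolding key_def prog_succ_def less_prod_def by auto

lemma key_inj:
  assumes "a \<in> {1..n}" "b \<in> {1..n}" "key E n a = key E n b"
  shows "a = b"
  using assms unfolding key_def by auto

lemma walk_exists:
  fixes n :: nat and E :: "(nat \<times> nat) set"
  assumes E: "E \<subseteq> {1..n} \<times> {1..n}"
  defines "I \<equiv> {s. influential E n s}"
  shows "\<exists>xs. successively (\<lambda>x y. (x,y) \<in> E) xs \<and> set xs \<subseteq> {1..n} \<and> I \<subseteq> set xs"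
proof -
  have Isub: "I \<subseteq> {1..n}" unfolding I_def influential_def by auto
  have fin: "finite I" using Isub finite_subset by blast
  have "S \<subseteq> I \<longrightarrow> (\<exists>xs. successively (\<lambda>x y. (x,y) \<in> E) xs \<and> set xs \<subseteq> {1..n} \<and> S \<subseteq> set xs
          \<and> (S \<noteq> {} \<longrightarrow> xs \<noteq> [] \<and> last xs \<in> S))" if "finite S" for S
    using that
  proof (induction S rule: finite_ranking_induct[where f = "key E n"])
    case empty
    show ?case by (rule impI, rule exI[of _ "[]"]) auto
  next
    case (insert x S)
    show ?case
    proof
      assume xS: "insert x S \<subseteq> I"
      then obtain xs where xs: "successively (\<lambda>x y. (x,y) \<in> E) xs" "set xs \<subseteq> {1..n}" "S \<subseteq> set xs"
        "S \<noteq> {} \<longrightarrow> xs \<noteq> [] \<and> last xs \<in> S" using insert by auto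
      have xn: "x \<in> {1..n}" using xS Isub by auto
      show "\<exists>xs. successively (\<lambda>x y. (x,y) \<in> E) xs \<and> set xs \<subseteq> {1..n} \<and> insert x S \<subseteq> set xs
          \<and> (insert x S \<noteq> {} \<longrightarrow> xs \<noteq> [] \<and> last xs \<in> insert x S)"
      proof (cases "S = {}")
        case True
        then show ?thesis using xn by (intro exI[of _ "[x]"]) auto
      next
        case False
        then have ne: "xs \<noteq> []" and lS: "last xs \<in> S" using xs(4) by auto
        let ?m = "last xs"
        have mn: "?m \<in> {1..n}" using lS xS Isub by auto
        have "key E n ?m \<le> key E n x" using insert.hyps(2) lS by auto
        then consider "?m = x" | "key E n ?m < key E n x"
          using key_inj[OF mn xn] by fastforce
        then show ?thesis
        proof cases
          case 1
          then show ?thesis using xs ne by (intro exI[of _ xs]) auto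
        next
          case 2
          then have ps: "prog_succ E n x ?m" using key_less[OF xn mn] by simp
          have "?m \<noteq> x" using 2 by auto
          then have "?m \<in> progeny_set E n x" using key_lemma[OF _ _ _ ps] xS lS unfolding I_def by auto
          then have mx: "(?m, x) \<in> E\<^sup>*" unfolding progeny_set_def by auto
          then obtain ys where ys: "ys \<noteq> []" "hd ys = ?m" "last ys = x"
            "successively (\<lambda>x y. (x,y) \<in> E) ys" "set ys \<subseteq> insert x (Domain E)"
            using walk_of_rtrancl[OF mx] by blast
          have ysn: "set ys \<subseteq> {1..n}" using ys(5) xn E by auto
          have tl: "successively (\<lambda>x y. (x,y) \<in> E) (tl ys)" using ys(4) by (rule succ_tl)
          have walk: "successively (\<lambda>x y. (x,y) \<in> E) (xs @ tl ys)"
          proof (cases "tl ys = []")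
            case True then show ?thesis using xs(1) by simp
          next
            case False
            have "(last xs, hd (tl ys)) \<in> E" using succ_hd[OF ys(4) False] ys(2) by simp
            then show ?thesis using xs(1) tl by (simp add: successively_append_iff)
          qed
          obtain a t where at: "ys = a # t" using ys(1) by (cases ys) auto
          have lst: "last (xs @ tl ys) = x"
          proof (cases "t = []")
            case True then show ?thesis using at ys(2,3) by simp
          next
            case False then show ?thesis using at ys(3) by simp
          qed
          have "set (tl ys) \<subseteq> set ys" using at by auto
          then have "set (xs @ tl ys) \<subseteq> {1..n}" using xs(2) ysn by auto
          moreover have "x \<in> set (xs @ tl ys)" using lst ne last_in_set[of "xs @ tl ys"] by simp
          ultimately show ?thesis using walk xs(3) lst ne
            by (intro exI[of _ "xs @ tl ys"]) auto
        qed
      qed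
    qed
  qed
  from this[OF fin] show ?thesis by (meson order_refl)
qed

theorem mainTheorem4:
  fixes n :: nat and E :: "(nat \<times> nat) set"
  assumes "E \<subseteq> {1..n} \<times> {1..n}"
    and "acyclic E"
  shows "(\<exists>xs. is_dpath E xs \<and> set xs \<subseteq> {1..n}
            \<and> (\<forall>s. influential E n s \<longrightarrow> s \<in> set xs)
            \<and> (\<forall>a b. influential E n a \<and> influential E n b \<and> a \<noteq> b \<and> prog_succ E n a b
                 \<longrightarrow> (\<exists>k l. k < l \<and> l < length xs \<and> xs ! k = b \<and> xs ! l = a)))
    \<and> (\<forall>a b. influential E n a \<and> influential E n b \<and> a \<noteq> b \<and> prog_succ E n a b
                 \<longrightarrow> b \<in> progeny_set E n a)"
proof
  obtain xs where xs: "successively (\<lambda>x y. (x,y) \<in> E) xs" "set xs \<subseteq> {1..n}"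
    "{s. influential E n s} \<subseteq> set xs"
    using walk_exists[OF assms(1)] by blast
  have dist: "distinct xs" using walk_distinct[OF xs(1) assms(2)] .
  have dp: "is_dpath E xs" unfolding is_dpath_def using dist succ_nth[OF xs(1)] by auto
  have ord: "\<exists>k l. k < l \<and> l < length xs \<and> xs ! k = b \<and> xs ! l = a"
    if h: "influential E n a" "influential E n b" "a \<noteq> b" "prog_succ E n a b" for a b
  proof -
    have "b \<in> progeny_set E n a" using key_lemma h by blast
    then have "(b,a) \<in> E\<^sup>*" unfolding progeny_set_def by auto
    then have ba: "(b,a) \<in> E\<^sup>+" using h(3) by (simp add: rtrancl_eq_or_trancl)
    obtain k where k: "k < length xs" "xs!k = b" using xs(3) h(2) by (metis in_set_conv_nth mem_Collect_eq subsetD)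
    obtain l where l: "l < length xs" "xs!l = a" using xs(3) h(1) by (metis in_set_conv_nth mem_Collect_eq subsetD)
    have "k \<noteq> l" using k l h(3) by auto
    moreover have "\<not> l < k"
    proof
      assume "l < k"
      then have "(a,b) \<in> E\<^sup>+" using succ_trancl[OF xs(1) _ k(1)] k l by auto
      then have "(a,a) \<in> E\<^sup>+" using ba by auto
      then show False using assms(2) unfolding acyclic_def by blast
    qed
    ultimately show ?thesis using k l by (intro exI[of _ k] exI[of _ l]) auto
  qed
  show "\<exists>xs. is_dpath E xs \<and> set xs \<subseteq> {1..n}
            \<and> (\<forall>s. influential E n s \<longrightarrow> s \<in> set xs)
            \<and> (\<forall>a b. influential E n a \<and> influential E n b \<and> a \<noteq> b \<and> prog_succ E n a b
                 \<longrightarrow> (\<exists>k l. k < l \<and> l < length xs \<and> xs ! k = b \<and> xs ! l = a))"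
  proof (intro exI[of _ xs] conjI allI impI)
    show "is_dpath E xs" by (rule dp)
    show "set xs \<subseteq> {1..n}" by (rule xs(2))
    show "s \<in> set xs" if "influential E n s" for s using that xs(3) by auto
    show "\<exists>k l. k < l \<and> l < length xs \<and> xs ! k = b \<and> xs ! l = a"
      if "influential E n a \<and> influential E n b \<and> a \<noteq> b \<and> prog_succ E n a b" for a b
      using that ord by simp
  qed
next
  show "\<forall>a b. influential E n a \<and> influential E n b \<and> a \<noteq> b \<and> prog_succ E n a b
                 \<longrightarrow> b \<in> progeny_set E n a" using key_lemma by simp
qed

end
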